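(* Let $z\in\mathbb{R}^n$, $\lambda_1,\lambda_2>0$, $l\le0\le u$ in $\mathbb{R}^n$, and $\omega_i(\alpha)=\lambda_2|\alpha|_0+\delta_{[l_i,u_i]}(\alpha)$. Define functions $P_s^*:\mathbb{R}\to(-\infty,+\infty]$ recursively by $P_1^*(\alpha)=\frac12(z_1-\alpha)^2+\omega_1(\alpha)$ and, for $s\in[2\!:\!n]$, $$P_s^*(\alpha)=\min\Big\{P_{s-1}^*(\alpha),\ \min_{\alpha'\in\mathbb{R}}P_{s-1}^*(\alpha')+\lambda_1\Big\}+\tfrac12(\alpha-z_s)^2+\omega_s(\alpha).$$ Then for each $s\in[2\!:\!n]$, $P_s^*$ (a piecewise linear-quadratic function) has at most $O(s^{1+o(1)})$ linear-quadratic pieces.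
   Context: $|t|_0=0$ if $t=0$ and $1$ otherwise; $\delta_{[a,b]}$ is the indicator of the interval $[a,b]$. $P_s^*$ is the function computed in the $s$-th iteration of the dynamic-programming algorithm for computing a point in the proximal mapping of $x\mapsto\lambda_1\sum_{j=1}^{n-1}|x_j-x_{j+1}|_0+\lambda_2\|x\|_0+\delta_{\{l\le x\le u\}}(x)$. *)

theory Defs
  imports "HOL-Analysis.Analysis"
begin

text \<open>Vectors in R^n are represented as functions nat => real, indexed 1..n.\<close>

definition l0norm :: "real \<Rightarrow> real" where
  "l0norm t = (if t = 0 then 0 else 1)"

definition omega :: "real \<Rightarrow> (nat \<Rightarrow> real) \<Rightarrow> (nat \<Rightarrow> real) \<Rightarrow> nat \<Rightarrow> real \<Rightarrow> ereal" where
  "omega lam2 l u i a = (if l i \<le> a \<and> a \<le> u i then ereal (lam2 * l0norm a) else \<infinity>)"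

text \<open>The dynamic programming functions P_s^*; index 0 is unused.\<close>
fun Pstar :: "real \<Rightarrow> real \<Rightarrow> (nat \<Rightarrow> real) \<Rightarrow> (nat \<Rightarrow> real) \<Rightarrow> (nat \<Rightarrow> real) \<Rightarrow> nat \<Rightarrow> real \<Rightarrow> ereal" where
  "Pstar lam1 lam2 z l u 0 a = \<infinity>"
| "Pstar lam1 lam2 z l u (Suc 0) a = ereal ((z 1 - a)^2 / 2) + omega lam2 l u 1 a"
| "Pstar lam1 lam2 z l u (Suc (Suc k)) a =
     min (Pstar lam1 lam2 z l u (Suc k) a)
         ((INF b. Pstar lam1 lam2 z l u (Suc k) b) + ereal lam1)
     + ereal ((a - z (Suc (Suc k)))^2 / 2) + omega lam2 l u (Suc (Suc k)) a"

definition lq_pieces :: "(real \<Rightarrow> ereal) \<Rightarrow> nat \<Rightarrow> bool" where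
  "lq_pieces f k \<longleftrightarrow>
     (\<exists>I :: nat \<Rightarrow> real set. \<exists>qa qb qc :: nat \<Rightarrow> real.
        (\<forall>i<k. is_interval (I i)) \<and>
        {x. f x \<noteq> \<infinity>} = (\<Union>i<k. I i) \<and>
        (\<forall>i<k. \<forall>x\<in>I i. f x = ereal (qa i * x^2 + qb i * x + qc i)))"

end

theory Submission
  imports Defs
begin

lemma quad_interval:
  fixes A1 A2 B1 B2 C1 C2 :: real
  assumes "A2 \<le> A1"
  shows "is_interval {x. A1*x^2+B1*x+C1 < A2*x^2+B2*x+C2}"
  unfolding is_interval_1
proof (intro ballI allI impI)
  fix a b x assume a: "a \<in> {x. A1*x^2+B1*x+C1 < A2*x^2+B2*x+C2}"
    and b: "b \<in> {x. A1*x^2+B1*x+C1 < A2*x^2+B2*x+C2}" and x: "a \<le> x \<and> x \<le> b"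
  define f where "f = (\<lambda>x. (A1-A2)*x^2+(B1-B2)*x+(C1-C2))"
  have fa: "f a < 0" and fb: "f b < 0" using a b by (auto simp: f_def algebra_simps)
  have id: "(b-x)*f a + (x-a)*f b - (b-a)*f x = (A1-A2)*(b-a)*(x-a)*(b-x)"
    unfolding f_def by (simp add: algebra_simps power2_eq_square)
  have "(A1-A2)*(b-a)*(x-a)*(b-x) \<ge> 0" using assms x by simp
  hence le: "(b-a)*f x \<le> (b-x)*f a + (x-a)*f b" using id by linarith
  have "f x < 0"
  proof (cases "a = b")
    case True then show ?thesis using x fa by auto
  next
    case False
    hence ab: "a < b" using x by auto
    have "(b-x)*f a \<le> 0" using fa x by (simp add: mult_nonneg_nonpos)
    moreover have "(x-a)*f b \<le> 0" using fb x by (simp add: mult_nonneg_nonpos)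
    moreover have "(b-x)*f a + (x-a)*f b < 0"
    proof (cases "x = b")
      case True then show ?thesis using fb ab by (simp add: mult_pos_neg)
    next
      case False then have "b - x > 0" using x by auto
      then have "(b-x)*f a < 0" using fa by (simp add: mult_pos_neg)
      then show ?thesis using \<open>(x-a)*f b \<le> 0\<close> by linarith
    qed
    ultimately have "(b-a)*f x < 0" using le by linarith
    then show ?thesis using ab by (simp add: mult_less_0_iff)
  qed
  then have "(A1-A2)*x^2+(B1-B2)*x+(C1-C2) < 0" by (simp add: f_def)
  then have "A1*x^2+B1*x+C1 < A2*x^2+B2*x+C2" by (simp add: left_diff_distrib)
  then show "x \<in> {x. A1*x^2+B1*x+C1 < A2*x^2+B2*x+C2}" by simp
qed

lemma envelope:
  fixes D :: "nat \<Rightarrow> real set" and Q :: "nat \<Rightarrow> real \<Rightarrow> real" and s :: nat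
  assumes Dint: "\<And>t. is_interval (D t)"
    and mono: "\<And>t t'. t \<le> t' \<Longrightarrow> D t \<subseteq> D t'"
    and conv: "\<And>t t'. 1 \<le> t \<Longrightarrow> t < t' \<Longrightarrow> t' \<le> s \<Longrightarrow> is_interval {x. Q t x < Q t' x}"
  shows "1 \<le> m \<Longrightarrow> m \<le> s \<Longrightarrow> \<exists>\<I>. finite \<I> \<and> card \<I> \<le> 2*(s-m)+1 \<and> (\<forall>I\<in>\<I>. is_interval I)
     \<and> \<Union>\<I> = D s \<and> (\<forall>I\<in>\<I>. \<forall>I'\<in>\<I>. I \<noteq> I' \<longrightarrow> I \<inter> I' = {})
     \<and> (\<forall>I\<in>\<I>. \<exists>\<tau>. m \<le> \<tau> \<and> \<tau> \<le> s \<and> (\<forall>x\<in>I. x \<in> D \<tau> \<and> (\<forall>t. m \<le> t \<longrightarrow> t \<le> s \<longrightarrow> x \<in> D t \<longrightarrow> Q \<tau> x \<le> Q t x)))"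
proof (induction "s - m" arbitrary: m)
  case 0
  then have ms: "m = s" by simp
  show ?case
    by (rule exI[of _ "{D s}"]) (use ms Dint in auto)
next
  case (Suc d)
  then have IHa: "\<exists>\<I>. finite \<I> \<and> card \<I> \<le> 2*(s-Suc m)+1 \<and> (\<forall>I\<in>\<I>. is_interval I)
     \<and> \<Union>\<I> = D s \<and> (\<forall>I\<in>\<I>. \<forall>I'\<in>\<I>. I \<noteq> I' \<longrightarrow> I \<inter> I' = {})
     \<and> (\<forall>I\<in>\<I>. \<exists>\<tau>. Suc m \<le> \<tau> \<and> \<tau> \<le> s \<and> (\<forall>x\<in>I. x \<in> D \<tau> \<and> (\<forall>t. Suc m \<le> t \<longrightarrow> t \<le> s \<longrightarrow> x \<in> D t \<longrightarrow> Q \<tau> x \<le> Q t x)))"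
    by simp
  then obtain \<I> where fin: "finite \<I>" and card: "card \<I> \<le> 2*(s-Suc m)+1" and ints: "\<forall>I\<in>\<I>. is_interval I"
    and un: "\<Union>\<I> = D s" and disj: "\<forall>I\<in>\<I>. \<forall>I'\<in>\<I>. I \<noteq> I' \<longrightarrow> I \<inter> I' = {}"
    and tau: "\<forall>I\<in>\<I>. \<exists>\<tau>. Suc m \<le> \<tau> \<and> \<tau> \<le> s \<and> (\<forall>x\<in>I. x \<in> D \<tau> \<and> (\<forall>t. Suc m \<le> t \<longrightarrow> t \<le> s \<longrightarrow> x \<in> D t \<longrightarrow> Q \<tau> x \<le> Q t x))"
    by (elim exE conjE) (rule that; assumption)
  have sm: "s - m = Suc (s - Suc m)" using Suc by simp
  define J where "J = {x \<in> D m. \<forall>t. Suc m \<le> t \<longrightarrow> t \<le> s \<longrightarrow> Q m x < Q t x}"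
  have Jint: "is_interval J" unfolding is_interval_1
  proof (intro ballI allI impI)
    fix a b x assume a: "a \<in> J" and b: "b \<in> J" and x: "a \<le> x \<and> x \<le> b"
    have "x \<in> D m" using a b x Dint[of m] unfolding J_def is_interval_1 by blast
    moreover have "Q m x < Q t x" if "Suc m \<le> t" "t \<le> s" for t
      using conv[of m t] that a b x Suc.prems unfolding J_def is_interval_1 by auto
    ultimately show "x \<in> J" unfolding J_def by blast
  qed
  have Jsub: "J \<subseteq> D s" using mono[of m s] Suc.prems unfolding J_def by auto
  have old: "\<exists>\<tau>. m \<le> \<tau> \<and> \<tau> \<le> s \<and> (\<forall>x\<in>I'. x \<in> D \<tau> \<and> (\<forall>t. m \<le> t \<longrightarrow> t \<le> s \<longrightarrow> x \<in> D t \<longrightarrow> Q \<tau> x \<le> Q t x))"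
    if I: "I \<in> \<I>" and sub: "I' \<subseteq> I" and dj: "I' \<inter> J = {}" for I I'
  proof -
    obtain \<tau> where t1: "Suc m \<le> \<tau>" "\<tau> \<le> s" and t2: "\<forall>x\<in>I. x \<in> D \<tau> \<and> (\<forall>t. Suc m \<le> t \<longrightarrow> t \<le> s \<longrightarrow> x \<in> D t \<longrightarrow> Q \<tau> x \<le> Q t x)"
      using tau I by blast
    have "\<forall>x\<in>I'. x \<in> D \<tau> \<and> (\<forall>t. m \<le> t \<longrightarrow> t \<le> s \<longrightarrow> x \<in> D t \<longrightarrow> Q \<tau> x \<le> Q t x)"
    proof (intro ballI conjI allI impI)
      fix x t assume x: "x \<in> I'" and t: "m \<le> t" "t \<le> s" "x \<in> D t"
      show "Q \<tau> x \<le> Q t x"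
      proof (cases "t = m")
        case False then show ?thesis using t t2 x sub by auto
      next
        case True
        have "x \<notin> J" using x dj by auto
        then obtain t' where t': "Suc m \<le> t'" "t' \<le> s" "\<not> Q m x < Q t' x" using t True unfolding J_def by auto
        have "x \<in> D t'" using mono[of m t'] t' t True by auto
        then have "Q \<tau> x \<le> Q t' x" using t2 x sub t' by auto
        then show ?thesis using t' True by auto
      qed
    next
      fix x assume "x \<in> I'" then show "x \<in> D \<tau>" using t2 sub by auto
    qed
    then show ?thesis using t1 by (intro exI[of _ \<tau>]) auto
  qed
  show ?case
  proof (cases "J = {}")
    case True
    show ?thesis
      apply (rule exI[of _ \<I>])
      using fin card ints un disj old[OF _ order_refl] True sm by auto
  next
    case False
    then obtain y0 where y0: "y0 \<in> J" by blast
    define L where "L = {x. \<forall>y\<in>J. x < y}"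
    define R where "R = {x. \<forall>y\<in>J. y < x}"
    define \<I>' where "\<I>' = insert J (((\<lambda>I. I \<inter> L) ` \<I> \<union> (\<lambda>I. I \<inter> R) ` \<I>) - {{}})"
    have LR: "L \<inter> R = {}"
    proof (rule ccontr)
      assume "L \<inter> R \<noteq> {}"
      then obtain x where "x \<in> L" "x \<in> R" by blast
      then have "x < y0" "y0 < x" using y0 unfolding L_def R_def by auto
      then show False by simp
    qed
    have JL: "J \<inter> L = {}"
    proof (rule ccontr)
      assume "J \<inter> L \<noteq> {}"
      then obtain x where x: "x \<in> J" "x \<in> L" by blast
      then have "x < x" unfolding L_def by blast
      then show False by simp
    qed
    have JR: "J \<inter> R = {}"
    proof (rule ccontr)
      assume "J \<inter> R \<noteq> {}"
      then obtain x where x: "x \<in> J" "x \<in> R" by blast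
      then have "x < x" unfolding R_def by blast
      then show False by simp
    qed
    have Lint: "is_interval L" unfolding is_interval_1
    proof (intro ballI allI impI)
      fix a b x assume "a \<in> L" "b \<in> L" "a \<le> x \<and> x \<le> b"
      then show "x \<in> L" unfolding L_def using le_less_trans by blast
    qed
    have Rint: "is_interval R" unfolding is_interval_1
    proof (intro ballI allI impI)
      fix a b x assume "a \<in> R" "b \<in> R" "a \<le> x \<and> x \<le> b"
      then show "x \<in> R" unfolding R_def using less_le_trans by blast
    qed
    have cover: "x \<in> J \<or> x \<in> L \<or> x \<in> R" for x
    proof (rule ccontr)
      assume "\<not> ?thesis"
      then have "\<not> (\<forall>y\<in>J. x < y)" "\<not> (\<forall>y\<in>J. y < x)" unfolding L_def R_def by auto
      then obtain y1 y2 where "y1 \<in> J" "y2 \<in> J" "y1 \<le> x" "x \<le> y2" by (auto simp: not_less)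
      then have "x \<in> J" using Jint unfolding is_interval_1 by blast
      with \<open>\<not> ?thesis\<close> show False by blast
    qed
    have finI': "finite \<I>'" unfolding \<I>'_def using fin by auto
    have c1: "card ((\<lambda>I. I \<inter> L) ` \<I> - {{}}) \<le> card {I\<in>\<I>. I \<inter> L \<noteq> {}}"
    proof -
      have "(\<lambda>I. I \<inter> L) ` \<I> - {{}} \<subseteq> (\<lambda>I. I \<inter> L) ` {I\<in>\<I>. I \<inter> L \<noteq> {}}" by auto
      then have "card ((\<lambda>I. I \<inter> L) ` \<I> - {{}}) \<le> card ((\<lambda>I. I \<inter> L) ` {I\<in>\<I>. I \<inter> L \<noteq> {}})"
        using fin by (intro card_mono) auto
      also have "\<dots> \<le> card {I\<in>\<I>. I \<inter> L \<noteq> {}}" by (rule card_image_le) (use fin in auto)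
      finally show ?thesis .
    qed
    have c2: "card ((\<lambda>I. I \<inter> R) ` \<I> - {{}}) \<le> card {I\<in>\<I>. I \<inter> R \<noteq> {}}"
    proof -
      have "(\<lambda>I. I \<inter> R) ` \<I> - {{}} \<subseteq> (\<lambda>I. I \<inter> R) ` {I\<in>\<I>. I \<inter> R \<noteq> {}}" by auto
      then have "card ((\<lambda>I. I \<inter> R) ` \<I> - {{}}) \<le> card ((\<lambda>I. I \<inter> R) ` {I\<in>\<I>. I \<inter> R \<noteq> {}})"
        using fin by (intro card_mono) auto
      also have "\<dots> \<le> card {I\<in>\<I>. I \<inter> R \<noteq> {}}" by (rule card_image_le) (use fin in auto)
      finally show ?thesis .
    qed
    have c3: "card ({I\<in>\<I>. I \<inter> L \<noteq> {}} \<inter> {I\<in>\<I>. I \<inter> R \<noteq> {}}) \<le> 1"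
    proof -
      have "I1 = I2" if "I1 \<in> {I\<in>\<I>. I \<inter> L \<noteq> {}} \<inter> {I\<in>\<I>. I \<inter> R \<noteq> {}}"
        "I2 \<in> {I\<in>\<I>. I \<inter> L \<noteq> {}} \<inter> {I\<in>\<I>. I \<inter> R \<noteq> {}}" for I1 I2
      proof -
        have "y0 \<in> I" if hI: "I \<in> \<I>" "I \<inter> L \<noteq> {}" "I \<inter> R \<noteq> {}" for I
        proof -
          obtain p q where "p \<in> I" "p \<in> L" "q \<in> I" "q \<in> R" using hI by blast
          then have "p \<le> y0" "y0 \<le> q" using y0 unfolding L_def R_def by auto
          moreover have "is_interval I" using ints hI(1) by blast
          ultimately show ?thesis using \<open>p \<in> I\<close> \<open>q \<in> I\<close> unfolding is_interval_1 by blast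
        qed
        then have "y0 \<in> I1" "y0 \<in> I2" using that by auto
        then show ?thesis using disj that by blast
      qed
      note eq = this
      have fin': "finite ({I\<in>\<I>. I \<inter> L \<noteq> {}} \<inter> {I\<in>\<I>. I \<inter> R \<noteq> {}})"
        by (rule finite_subset[OF _ fin]) blast
      have "card ({I\<in>\<I>. I \<inter> L \<noteq> {}} \<inter> {I\<in>\<I>. I \<inter> R \<noteq> {}}) \<le> Suc 0"
        using card_le_Suc0_iff_eq[OF fin'] eq by blast
      then show ?thesis by simp
    qed
    have c4: "card {I\<in>\<I>. I \<inter> L \<noteq> {}} + card {I\<in>\<I>. I \<inter> R \<noteq> {}} \<le> card \<I> + 1"
    proof -
      have "card {I\<in>\<I>. I \<inter> L \<noteq> {}} + card {I\<in>\<I>. I \<inter> R \<noteq> {}}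
          = card ({I\<in>\<I>. I \<inter> L \<noteq> {}} \<union> {I\<in>\<I>. I \<inter> R \<noteq> {}}) + card ({I\<in>\<I>. I \<inter> L \<noteq> {}} \<inter> {I\<in>\<I>. I \<inter> R \<noteq> {}})"
        by (rule card_Un_Int) (use fin in auto)
      moreover have "card ({I\<in>\<I>. I \<inter> L \<noteq> {}} \<union> {I\<in>\<I>. I \<inter> R \<noteq> {}}) \<le> card \<I>"
        by (rule card_mono) (use fin in auto)
      ultimately show ?thesis using c3 by linarith
    qed
    have "card \<I>' \<le> Suc (card (((\<lambda>I. I \<inter> L) ` \<I> \<union> (\<lambda>I. I \<inter> R) ` \<I>) - {{}}))"
      unfolding \<I>'_def using fin by (simp add: card_insert_if)
    also have "card (((\<lambda>I. I \<inter> L) ` \<I> \<union> (\<lambda>I. I \<inter> R) ` \<I>) - {{}}) \<le>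
        card ((\<lambda>I. I \<inter> L) ` \<I> - {{}}) + card ((\<lambda>I. I \<inter> R) ` \<I> - {{}})"
      unfolding Un_Diff by (rule card_Un_le)
    finally have "card \<I>' \<le> card \<I> + 2" using c1 c2 c4 by linarith
    then have cardI': "card \<I>' \<le> 2*(s-m)+1" using card sm by linarith
    have mem: "I = J \<or> (\<exists>I0\<in>\<I>. I = I0 \<inter> L) \<or> (\<exists>I0\<in>\<I>. I = I0 \<inter> R)" if "I \<in> \<I>'" for I
      using that unfolding \<I>'_def by blast
    have intsI': "\<forall>I\<in>\<I>'. is_interval I"
    proof
      fix I assume "I \<in> \<I>'"
      then consider "I = J" | I0 where "I0 \<in> \<I>" "I = I0 \<inter> L" | I0 where "I0 \<in> \<I>" "I = I0 \<inter> R"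
        using mem by blast
      then show "is_interval I"
      proof cases
        case 1 then show ?thesis using Jint by simp
      next
        case 2 then show ?thesis using is_interval_Int[of I0 L] ints Lint by simp
      next
        case 3 then show ?thesis using is_interval_Int[of I0 R] ints Rint by simp
      qed
    qed
    have unI': "\<Union>\<I>' = D s"
    proof
      show "\<Union>\<I>' \<subseteq> D s" unfolding \<I>'_def using Jsub un by auto
      show "D s \<subseteq> \<Union>\<I>'"
      proof
        fix x assume "x \<in> D s"
        then obtain I where I: "I \<in> \<I>" "x \<in> I" using un by auto
        show "x \<in> \<Union>\<I>'" using cover[of x] I unfolding \<I>'_def by blast
      qed
    qed
    have disjI': "\<forall>I\<in>\<I>'. \<forall>I'\<in>\<I>'. I \<noteq> I' \<longrightarrow> I \<inter> I' = {}"
    proof (intro ballI impI)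
      fix I1 I2 assume h1: "I1 \<in> \<I>'" and h2: "I2 \<in> \<I>'" and ne: "I1 \<noteq> I2"
      have sameL: "A \<inter> L \<inter> (B \<inter> L) = {}" if "A \<in> \<I>" "B \<in> \<I>" "A \<inter> L \<noteq> B \<inter> L" for A B
      proof -
        have "A \<noteq> B" using that by metis
        then have "A \<inter> B = {}" using disj that by blast
        then show ?thesis by blast
      qed
      have sameR: "A \<inter> R \<inter> (B \<inter> R) = {}" if "A \<in> \<I>" "B \<in> \<I>" "A \<inter> R \<noteq> B \<inter> R" for A B
      proof -
        have "A \<noteq> B" using that by metis
        then have "A \<inter> B = {}" using disj that by blast
        then show ?thesis by blast
      qed
      consider "I1 = J" | A where "A \<in> \<I>" "I1 = A \<inter> L" | A where "A \<in> \<I>" "I1 = A \<inter> R"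
        using mem[OF h1] by blast
      then show "I1 \<inter> I2 = {}"
      proof cases
        case 1
        consider "I2 = J" | B where "B \<in> \<I>" "I2 = B \<inter> L" | B where "B \<in> \<I>" "I2 = B \<inter> R"
          using mem[OF h2] by blast
        then show ?thesis
        proof cases
          case 1 then show ?thesis using ne \<open>I1 = J\<close> by simp
        next
          case 2 then show ?thesis using JL \<open>I1 = J\<close> by blast
        next
          case 3 then show ?thesis using JR \<open>I1 = J\<close> by blast
        qed
      next
        case 2
        note A = this
        consider "I2 = J" | B where "B \<in> \<I>" "I2 = B \<inter> L" | B where "B \<in> \<I>" "I2 = B \<inter> R"
          using mem[OF h2] by blast
        then show ?thesis
        proof cases
          case 1 then show ?thesis using JL A by blast
        next
          case 2 then show ?thesis using sameL[of A B] A ne by simp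
        next
          case 3 then show ?thesis using LR A by blast
        qed
      next
        case 3
        note A = this
        consider "I2 = J" | B where "B \<in> \<I>" "I2 = B \<inter> L" | B where "B \<in> \<I>" "I2 = B \<inter> R"
          using mem[OF h2] by blast
        then show ?thesis
        proof cases
          case 1 then show ?thesis using JR A by blast
        next
          case 2 then show ?thesis using LR A by blast
        next
          case 3 then show ?thesis using sameR[of A B] A ne by simp
        qed
      qed
    qed
    have tauI': "\<forall>I\<in>\<I>'. \<exists>\<tau>. m \<le> \<tau> \<and> \<tau> \<le> s \<and> (\<forall>x\<in>I. x \<in> D \<tau> \<and> (\<forall>t. m \<le> t \<longrightarrow> t \<le> s \<longrightarrow> x \<in> D t \<longrightarrow> Q \<tau> x \<le> Q t x))"
    proof
      fix I assume "I \<in> \<I>'"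
      then consider "I = J" | I0 where "I0 \<in> \<I>" "I = I0 \<inter> L" | I0 where "I0 \<in> \<I>" "I = I0 \<inter> R"
        using mem by blast
      then show "\<exists>\<tau>. m \<le> \<tau> \<and> \<tau> \<le> s \<and> (\<forall>x\<in>I. x \<in> D \<tau> \<and> (\<forall>t. m \<le> t \<longrightarrow> t \<le> s \<longrightarrow> x \<in> D t \<longrightarrow> Q \<tau> x \<le> Q t x))"
      proof cases
        case 1
        show ?thesis
        proof (intro exI[of _ m] conjI ballI allI impI)
          show "m \<le> m" by simp
          show "m \<le> s" using Suc.prems by simp
          fix x assume "x \<in> I" then show "x \<in> D m" using 1 unfolding J_def by auto
        next
          fix x t assume "x \<in> I" "m \<le> t" "t \<le> s" "x \<in> D t"
          then show "Q m x \<le> Q t x" using 1 unfolding J_def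
          proof (cases "t = m")
            case False
            then have "Suc m \<le> t" using \<open>m \<le> t\<close> by simp
            then show ?thesis using \<open>x \<in> I\<close> \<open>t \<le> s\<close> 1 unfolding J_def
              by (auto intro: less_imp_le)
          qed simp
        qed
      next
        case 2 then show ?thesis using old[of I0 I] JL by blast
      next
        case 3 then show ?thesis using old[of I0 I] JR by blast
      qed
    qed
    show ?thesis
      apply (rule exI[of _ \<I>'])
      using finI' cardI' intsI' unI' disjI' tauI' by (intro conjI)
  qed
qed

lemma quad_sum:
  fixes x k :: real and z :: "nat \<Rightarrow> real"
  assumes "finite S"
  shows "(\<Sum>j\<in>S. (x - z j)^2/2 + k) = real (card S)/2 * x^2 + (-(\<Sum>j\<in>S. z j)) * x + (\<Sum>j\<in>S. (z j)^2/2 + k)"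
proof -
  have e: "(x - z j)^2/2 + k = x^2/2 + (-(z j)) * x + ((z j)^2/2 + k)" for j
    by (simp add: power2_diff field_simps)
  have "(\<Sum>j\<in>S. (x - z j)^2/2 + k) = (\<Sum>j\<in>S. x^2/2 + (-(z j)) * x + ((z j)^2/2 + k))"
    by (rule sum.cong[OF refl]) (rule e)
  also have "\<dots> = (\<Sum>j\<in>S. x^2/2) + (\<Sum>j\<in>S. (-(z j)) * x) + (\<Sum>j\<in>S. (z j)^2/2 + k)"
    by (simp only: sum.distrib)
  also have "\<dots> = real (card S)/2 * x^2 + (-(\<Sum>j\<in>S. z j)) * x + (\<Sum>j\<in>S. (z j)^2/2 + k)"
  proof -
    have 1: "(\<Sum>j\<in>S. x^2/2) = real (card S)/2 * x^2" by simp
    have 2: "(\<Sum>j\<in>S. (-(z j)) * x) = (-(\<Sum>j\<in>S. z j)) * x"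
      by (simp only: sum_distrib_right[symmetric] sum_negf)
    show ?thesis by (simp only: 1 2)
  qed
  finally show ?thesis .
qed

lemma lq_from_family:
  fixes f :: "real \<Rightarrow> ereal"
  assumes fin: "finite K"
    and good: "\<forall>I\<in>K. is_interval I \<and> (\<exists>a b c. \<forall>x\<in>I. f x = ereal (a*x^2+b*x+c))"
    and dom: "{x. f x \<noteq> \<infinity>} = \<Union>K"
  shows "lq_pieces f (card K)"
proof -
  obtain h where bij: "bij_betw h {0..<card K} K" using ex_bij_betw_nat_finite[OF fin] by blast
  have hK: "h i \<in> K" if "i < card K" for i using bij that unfolding bij_betw_def by auto
  have "\<forall>i. \<exists>q::real\<times>real\<times>real. i < card K \<longrightarrow> (\<forall>x\<in>h i. f x = ereal (fst q*x^2+fst (snd q)*x+snd (snd q)))"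
  proof
    fix i
    show "\<exists>q::real\<times>real\<times>real. i < card K \<longrightarrow> (\<forall>x\<in>h i. f x = ereal (fst q*x^2+fst (snd q)*x+snd (snd q)))"
    proof (cases "i < card K")
      case True
      then obtain a b c where "\<forall>x\<in>h i. f x = ereal (a*x^2+b*x+c)" using good hK by blast
      then show ?thesis by (intro exI[of _ "(a,b,c)"]) simp
    qed simp
  qed
  then obtain q :: "nat \<Rightarrow> real\<times>real\<times>real" where
    q: "\<forall>i. i < card K \<longrightarrow> (\<forall>x\<in>h i. f x = ereal (fst (q i)*x^2+fst (snd (q i))*x+snd (snd (q i))))"
    by (metis choice)
  have un: "(\<Union>i<card K. h i) = \<Union>K"
    using bij_betw_imp_surj_on[OF bij] by (simp add: atLeast0LessThan)
  show ?thesis unfolding lq_pieces_def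
    apply (rule exI[of _ h])
    apply (rule exI[of _ "\<lambda>i. fst (q i)"])
    apply (rule exI[of _ "\<lambda>i. fst (snd (q i))"])
    apply (rule exI[of _ "\<lambda>i. snd (snd (q i))"])
    using good hK dom un q by auto
qed

context
  fixes lam1 lam2 :: real and z l u :: "nat \<Rightarrow> real"
begin

definition gg :: "nat \<Rightarrow> real \<Rightarrow> ereal" where
  "gg j a = ereal ((a - z j)^2/2) + omega lam2 l u j a"
definition cc :: "nat \<Rightarrow> ereal" where
  "cc t = (INF b. Pstar lam1 lam2 z l u t b) + ereal lam1"
definition FF :: "nat \<Rightarrow> nat \<Rightarrow> real \<Rightarrow> ereal" where
  "FF t s a = (if t = 1 then 0 else cc (t-1)) + (\<Sum>j\<in>{t..s}. gg j a)"

lemma closed: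
  assumes "1 \<le> s"
  shows "(\<exists>t\<in>{1..s}. Pstar lam1 lam2 z l u s a = FF t s a) \<and> (\<forall>t\<in>{1..s}. Pstar lam1 lam2 z l u s a \<le> FF t s a)"
  using assms
proof (induction s rule: nat_induct_at_least)
  case base
  have "Pstar lam1 lam2 z l u 1 a = gg 1 a" by (simp add: gg_def power2_commute)
  moreover have "FF 1 1 a = gg 1 a" by (simp add: FF_def)
  ultimately show ?case by simp
next
  case (Suc n)
  obtain k where k: "n = Suc k" using Suc.hyps by (cases n) auto
  let ?P = "Pstar lam1 lam2 z l u"
  have PS: "?P (Suc n) a = min (?P n a) (cc n) + gg (Suc n) a"
    using k by (simp add: cc_def gg_def add.assoc)
  have Fold: "FF t (Suc n) a = FF t n a + gg (Suc n) a" if "t \<le> n" for t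
    using that by (simp add: FF_def add.assoc)
  have Fnew: "FF (Suc n) (Suc n) a = cc n + gg (Suc n) a"
    using k by (simp add: FF_def)
  show ?case
  proof
    show "\<exists>t\<in>{1..Suc n}. ?P (Suc n) a = FF t (Suc n) a"
    proof (cases "?P n a \<le> cc n")
      case True
      obtain t where t: "t \<in> {1..n}" "?P n a = FF t n a" using Suc.IH by blast
      then show ?thesis using True PS Fold[of t] by (intro bexI[of _ t]) (auto simp: min_def)
    next
      case False
      then show ?thesis using PS Fnew by (intro bexI[of _ "Suc n"]) (auto simp: min_def)
    qed
    show "\<forall>t\<in>{1..Suc n}. ?P (Suc n) a \<le> FF t (Suc n) a"
    proof
      fix t assume t: "t \<in> {1..Suc n}"
      show "?P (Suc n) a \<le> FF t (Suc n) a"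
      proof (cases "t = Suc n")
        case True
        then show ?thesis using PS Fnew by (simp add: add_right_mono)
      next
        case False
        then have "t \<in> {1..n}" using t by auto
        then have "?P n a \<le> FF t n a" using Suc.IH by blast
        then have "min (?P n a) (cc n) \<le> FF t n a" by (simp add: min.coboundedI1)
        then show ?thesis using PS Fold[of t] \<open>t \<in> {1..n}\<close> by (simp add: add_right_mono)
      qed
    qed
  qed
qed

lemma omega_nonneg: "0 \<le> lam2 \<Longrightarrow> 0 \<le> omega lam2 l u j a"
  by (simp add: omega_def l0norm_def)

lemma Pnn:
  assumes "0 \<le> lam1" "0 \<le> lam2"
  shows "0 \<le> Pstar lam1 lam2 z l u s a"
proof (induction s arbitrary: a rule: nat_less_induct)
  case (1 s)
  show ?case
  proof (cases s)
    case 0 then show ?thesis by simp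
  next
    case (Suc k)
    show ?thesis
    proof (cases k)
      case 0 then show ?thesis using Suc omega_nonneg[OF assms(2)] by simp
    next
      case (Suc k')
      have ih: "0 \<le> Pstar lam1 lam2 z l u k b" for b using 1 \<open>s = Suc k\<close> by simp
      have "0 \<le> (INF b. Pstar lam1 lam2 z l u k b)" using ih by (simp add: INF_greatest)
      then have "0 \<le> (INF b. Pstar lam1 lam2 z l u k b) + ereal lam1" using assms(1) by simp
      then have "0 \<le> min (Pstar lam1 lam2 z l u k a) ((INF b. Pstar lam1 lam2 z l u k b) + ereal lam1)"
        using ih by simp
      then show ?thesis using \<open>s = Suc k\<close> Suc omega_nonneg[OF assms(2)] by simp
    qed
  qed
qed

lemma gg_in: "l j \<le> a \<Longrightarrow> a \<le> u j \<Longrightarrow> gg j a = ereal ((a - z j)^2/2 + lam2 * l0norm a)"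
  by (simp add: gg_def omega_def)

lemma gg_out: "\<not> (l j \<le> a \<and> a \<le> u j) \<Longrightarrow> gg j a = \<infinity>"
  by (simp add: gg_def omega_def)


definition Cr :: "nat \<Rightarrow> real" where
  "Cr t = (if t = 1 then 0 else real_of_ereal (cc (t-1)))"

lemma FF_in:
  assumes "1 \<le> t" "\<forall>j\<in>{t..s}. l j \<le> a \<and> a \<le> u j"
    and cf: "t \<noteq> 1 \<Longrightarrow> \<exists>r. cc (t-1) = ereal r"
  shows "FF t s a = ereal (Cr t + (\<Sum>j\<in>{t..s}. (a - z j)^2/2 + lam2 * l0norm a))"
proof -
  have "(\<Sum>j\<in>{t..s}. gg j a) = (\<Sum>j\<in>{t..s}. ereal ((a - z j)^2/2 + lam2 * l0norm a))"
    by (rule sum.cong[OF refl]) (use assms(2) gg_in in auto)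
  also have "\<dots> = ereal (\<Sum>j\<in>{t..s}. (a - z j)^2/2 + lam2 * l0norm a)" by simp
  finally have S: "(\<Sum>j\<in>{t..s}. gg j a) = ereal (\<Sum>j\<in>{t..s}. (a - z j)^2/2 + lam2 * l0norm a)" .
  show ?thesis
  proof (cases "t = 1")
    case True then show ?thesis unfolding FF_def Cr_def S by simp
  next
    case False
    then obtain r where r: "cc (t-1) = ereal r" using cf by blast
    show ?thesis unfolding FF_def Cr_def S r using False by simp
  qed
qed

lemma FF_out:
  assumes "\<not> (\<forall>j\<in>{t..s}. l j \<le> a \<and> a \<le> u j)"
  shows "FF t s a = \<infinity>"
proof -
  obtain j where "j \<in> {t..s}" "\<not> (l j \<le> a \<and> a \<le> u j)" using assms by blast
  then have "(\<Sum>j\<in>{t..s}. gg j a) = \<infinity>" using gg_out sum_Pinfty by (metis finite_atLeastAtMost)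
  then show ?thesis by (simp add: FF_def)
qed

lemma cc_fin:
  assumes lam: "0 \<le> lam1" "0 \<le> lam2" and lu: "\<forall>i\<in>{1..n}. l i \<le> 0 \<and> 0 \<le> u i"
    and t: "1 \<le> t" "t \<le> n"
  shows "\<exists>r. cc t = ereal r"
proof -
  have "\<forall>j\<in>{1..t}. l j \<le> 0 \<and> 0 \<le> u j" using lu t by auto
  then have F1: "FF 1 t 0 = ereal (Cr 1 + (\<Sum>j\<in>{1..t}. (0 - z j)^2/2 + lam2 * l0norm 0))"
    by (intro FF_in) auto
  have "Pstar lam1 lam2 z l u t 0 \<le> FF 1 t 0" using closed[OF t(1), of 0] t by auto
  then have up: "(INF b. Pstar lam1 lam2 z l u t b) \<le> ereal (Cr 1 + (\<Sum>j\<in>{1..t}. (0 - z j)^2/2 + lam2 * l0norm 0))"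
    using F1 by (metis INF_lower UNIV_I order_trans)
  have lo: "0 \<le> (INF b. Pstar lam1 lam2 z l u t b)" using Pnn[OF lam] by (simp add: INF_greatest)
  obtain r where "(INF b. Pstar lam1 lam2 z l u t b) = ereal r"
    using up lo by (cases "(INF b. Pstar lam1 lam2 z l u t b)") auto
  then show ?thesis by (simp add: cc_def)
qed

lemma region:
  assumes lam: "0 \<le> lam1" "0 \<le> lam2" and lu: "\<forall>i\<in>{1..n}. l i \<le> 0 \<and> 0 \<le> u i"
    and s: "1 \<le> s" "s \<le> n" and R: "is_interval R" and sig: "\<forall>x\<in>R. l0norm x = \<sigma>"
  shows "\<exists>\<I>. finite \<I> \<and> card \<I> \<le> 2*(s-1)+1 \<and> \<Union>\<I> = {x. l s \<le> x \<and> x \<le> u s} \<inter> R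
     \<and> (\<forall>I\<in>\<I>. is_interval I \<and> (\<exists>a b c. \<forall>x\<in>I. Pstar lam1 lam2 z l u s x = ereal (a*x^2+b*x+c)))"
proof -
  define Dm where "Dm t = {x. \<forall>j\<in>{t..s}. l j \<le> x \<and> x \<le> u j} \<inter> R" for t
  define Q where "Q t x = Cr t + (\<Sum>j\<in>{t..s}. (x - z j)^2/2 + lam2*\<sigma>)" for t x
  have Dint: "is_interval (Dm t)" for t
    unfolding is_interval_1
  proof (intro ballI allI impI)
    fix a b x assume a: "a \<in> Dm t" and b: "b \<in> Dm t" and x: "a \<le> x \<and> x \<le> b"
    have "x \<in> R" using a b x R unfolding Dm_def is_interval_1 by blast
    moreover have "l j \<le> x \<and> x \<le> u j" if "j \<in> {t..s}" for j
      using a b x that unfolding Dm_def by force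
    ultimately show "x \<in> Dm t" unfolding Dm_def by blast
  qed
  have mono: "Dm t \<subseteq> Dm t'" if "t \<le> t'" for t t' using that unfolding Dm_def by auto
  have Qf: "Q t x = (real (card {t..s})/2) * x^2 + (-(\<Sum>j\<in>{t..s}. z j)) * x + (Cr t + (\<Sum>j\<in>{t..s}. (z j)^2/2 + lam2*\<sigma>))" for t x
    using quad_sum[of "{t..s}" x z "lam2*\<sigma>"] unfolding Q_def by simp
  have conv: "is_interval {x. Q t x < Q t' x}" if "1 \<le> t" "t < t'" "t' \<le> s" for t t'
  proof -
    have "real (card {t'..s})/2 \<le> real (card {t..s})/2" using that by simp
    then show ?thesis unfolding Qf by (rule quad_interval)
  qed
  have env: "\<exists>\<I>. finite \<I> \<and> card \<I> \<le> 2*(s-1)+1 \<and> (\<forall>I\<in>\<I>. is_interval I)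
     \<and> \<Union>\<I> = Dm s \<and> (\<forall>I\<in>\<I>. \<forall>I'\<in>\<I>. I \<noteq> I' \<longrightarrow> I \<inter> I' = {})
     \<and> (\<forall>I\<in>\<I>. \<exists>\<tau>. 1 \<le> \<tau> \<and> \<tau> \<le> s \<and> (\<forall>x\<in>I. x \<in> Dm \<tau> \<and> (\<forall>t. 1 \<le> t \<longrightarrow> t \<le> s \<longrightarrow> x \<in> Dm t \<longrightarrow> Q \<tau> x \<le> Q t x)))"
    apply (rule envelope[of Dm s Q 1])
    using s(1) by (simp_all add: Dint mono conv)
  obtain \<I> where fin: "finite \<I>" and card: "card \<I> \<le> 2*(s-1)+1" and ints: "\<forall>I\<in>\<I>. is_interval I"
    and un: "\<Union>\<I> = Dm s" and disj: "\<forall>I\<in>\<I>. \<forall>I'\<in>\<I>. I \<noteq> I' \<longrightarrow> I \<inter> I' = {}"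
    and tau: "\<forall>I\<in>\<I>. \<exists>\<tau>. 1 \<le> \<tau> \<and> \<tau> \<le> s \<and> (\<forall>x\<in>I. x \<in> Dm \<tau> \<and> (\<forall>t. 1 \<le> t \<longrightarrow> t \<le> s \<longrightarrow> x \<in> Dm t \<longrightarrow> Q \<tau> x \<le> Q t x))"
    using env by (elim exE conjE) (rule that; assumption)
  have cf: "\<exists>r. cc (t-1) = ereal r" if "1 \<le> t" "t \<le> s" "t \<noteq> 1" for t
    using cc_fin[OF lam lu, of "t-1"] that s by auto
  have FFv: "FF t s x = ereal (Q t x)" if "1 \<le> t" "t \<le> s" "x \<in> Dm t" for t x
  proof -
    have "l0norm x = \<sigma>" using that sig unfolding Dm_def by auto
    moreover have "FF t s x = ereal (Cr t + (\<Sum>j\<in>{t..s}. (x - z j)^2/2 + lam2 * l0norm x))"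
      using that cf unfolding Dm_def by (intro FF_in) auto
    ultimately show ?thesis unfolding Q_def by simp
  qed
  have good: "is_interval I \<and> (\<exists>a b c. \<forall>x\<in>I. Pstar lam1 lam2 z l u s x = ereal (a*x^2+b*x+c))" if I: "I \<in> \<I>" for I
  proof -
    obtain \<tau> where t1: "1 \<le> \<tau>" "\<tau> \<le> s" and t2: "\<forall>x\<in>I. x \<in> Dm \<tau> \<and> (\<forall>t. 1 \<le> t \<longrightarrow> t \<le> s \<longrightarrow> x \<in> Dm t \<longrightarrow> Q \<tau> x \<le> Q t x)"
      using tau I by blast
    have val: "Pstar lam1 lam2 z l u s x = ereal (Q \<tau> x)" if x: "x \<in> I" for x
    proof (rule antisym)
      have "Pstar lam1 lam2 z l u s x \<le> FF \<tau> s x" using closed[OF s(1), of x] t1 by auto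
      also have "\<dots> = ereal (Q \<tau> x)" using FFv t1 t2 x by auto
      finally show "Pstar lam1 lam2 z l u s x \<le> ereal (Q \<tau> x)" .
      obtain t0 where t0: "t0 \<in> {1..s}" "Pstar lam1 lam2 z l u s x = FF t0 s x" using closed[OF s(1), of x] by blast
      show "ereal (Q \<tau> x) \<le> Pstar lam1 lam2 z l u s x"
      proof (cases "x \<in> Dm t0")
        case True
        then have "Pstar lam1 lam2 z l u s x = ereal (Q t0 x)" using FFv t0 by auto
        moreover have "Q \<tau> x \<le> Q t0 x" using t2 x t0 True by auto
        ultimately show ?thesis by simp
      next
        case False
        have "x \<in> R" using t2 x unfolding Dm_def by auto
        then have "\<not> (\<forall>j\<in>{t0..s}. l j \<le> x \<and> x \<le> u j)" using False unfolding Dm_def by auto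
        then have "Pstar lam1 lam2 z l u s x = \<infinity>" using t0 FF_out by simp
        then show ?thesis by simp
      qed
    qed
    show ?thesis
    proof
      show "is_interval I" using ints I by blast
      show "\<exists>a b c. \<forall>x\<in>I. Pstar lam1 lam2 z l u s x = ereal (a*x^2+b*x+c)"
        using val by (subst (asm) Qf) blast
    qed
  qed
  have "Dm s = {x. l s \<le> x \<and> x \<le> u s} \<inter> R" unfolding Dm_def by auto
  then show ?thesis using fin card un good by blast
qed

lemma main_bound:
  assumes lam: "0 \<le> lam1" "0 \<le> lam2" and lu: "\<forall>i\<in>{1..n}. l i \<le> 0 \<and> 0 \<le> u i"
    and s: "1 \<le> s" "s \<le> n"
  shows "\<exists>k. lq_pieces (Pstar lam1 lam2 z l u s) k \<and> k \<le> 6 * s"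
proof -
  have i1: "is_interval {x::real. x < 0}" unfolding is_interval_1 by auto
  have i2: "is_interval {0::real}" unfolding is_interval_1 by auto
  have i3: "is_interval {x::real. 0 < x}" unfolding is_interval_1 by auto
  obtain I1 where I1: "finite I1" "card I1 \<le> 2*(s-1)+1" "\<Union>I1 = {x. l s \<le> x \<and> x \<le> u s} \<inter> {x. x < 0}"
     "\<forall>I\<in>I1. is_interval I \<and> (\<exists>a b c. \<forall>x\<in>I. Pstar lam1 lam2 z l u s x = ereal (a*x^2+b*x+c))"
    using region[OF lam lu s i1, of 1] by (auto simp: l0norm_def)
  obtain I2 where I2: "finite I2" "card I2 \<le> 2*(s-1)+1" "\<Union>I2 = {x. l s \<le> x \<and> x \<le> u s} \<inter> {0}"
     "\<forall>I\<in>I2. is_interval I \<and> (\<exists>a b c. \<forall>x\<in>I. Pstar lam1 lam2 z l u s x = ereal (a*x^2+b*x+c))"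
    using region[OF lam lu s i2, of 0] by (auto simp: l0norm_def)
  obtain I3 where I3: "finite I3" "card I3 \<le> 2*(s-1)+1" "\<Union>I3 = {x. l s \<le> x \<and> x \<le> u s} \<inter> {x. 0 < x}"
     "\<forall>I\<in>I3. is_interval I \<and> (\<exists>a b c. \<forall>x\<in>I. Pstar lam1 lam2 z l u s x = ereal (a*x^2+b*x+c))"
    using region[OF lam lu s i3, of 1] by (auto simp: l0norm_def)
  define K where "K = I1 \<union> I2 \<union> I3"
  have finK: "finite K" using I1 I2 I3 unfolding K_def by auto
  have "card K \<le> card I1 + card I2 + card I3" unfolding K_def
    by (meson card_Un_le le_trans add_right_mono)
  then have cardK: "card K \<le> 6 * s" using I1(2) I2(2) I3(2) s by linarith
  have goodK: "\<forall>I\<in>K. is_interval I \<and> (\<exists>a b c. \<forall>x\<in>I. Pstar lam1 lam2 z l u s x = ereal (a*x^2+b*x+c))"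
    using I1(4) I2(4) I3(4) unfolding K_def by blast
  have unK: "\<Union>K = {x. l s \<le> x \<and> x \<le> u s}"
  proof -
    have "\<Union>K = \<Union>I1 \<union> \<Union>I2 \<union> \<Union>I3" unfolding K_def by blast
    also have "\<dots> = {x. l s \<le> x \<and> x \<le> u s}" unfolding I1(3) I2(3) I3(3) by auto
    finally show ?thesis .
  qed
  have dom: "{x. Pstar lam1 lam2 z l u s x \<noteq> \<infinity>} = \<Union>K"
  proof
    show "\<Union>K \<subseteq> {x. Pstar lam1 lam2 z l u s x \<noteq> \<infinity>}"
    proof
      fix x assume "x \<in> \<Union>K"
      then obtain I where "I \<in> K" "x \<in> I" by blast
      then obtain a b c where "Pstar lam1 lam2 z l u s x = ereal (a*x^2+b*x+c)" using goodK by blast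
      then show "x \<in> {x. Pstar lam1 lam2 z l u s x \<noteq> \<infinity>}" by simp
    qed
    show "{x. Pstar lam1 lam2 z l u s x \<noteq> \<infinity>} \<subseteq> \<Union>K"
    proof
      fix x assume x: "x \<in> {x. Pstar lam1 lam2 z l u s x \<noteq> \<infinity>}"
      show "x \<in> \<Union>K"
      proof (rule ccontr)
        assume "x \<notin> \<Union>K"
        then have nx: "\<not> (l s \<le> x \<and> x \<le> u s)" using unK by auto
        obtain t0 where t0: "t0 \<in> {1..s}" "Pstar lam1 lam2 z l u s x = FF t0 s x" using closed[OF s(1), of x] by blast
        have "\<not> (\<forall>j\<in>{t0..s}. l j \<le> x \<and> x \<le> u j)" using nx t0(1) by auto
        then have "Pstar lam1 lam2 z l u s x = \<infinity>" using t0 FF_out by simp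
        then show False using x by simp
      qed
    qed
  qed
  show ?thesis using lq_from_family[OF finK goodK dom] cardK by blast
qed

end

theorem lemma3p5:
  "\<forall>\<epsilon>>0. \<exists>C::real. \<forall>(n::nat) (z::nat \<Rightarrow> real) (l::nat \<Rightarrow> real) (u::nat \<Rightarrow> real)
      (lam1::real) (lam2::real) (s::nat).
      lam1 > 0 \<longrightarrow> lam2 > 0 \<longrightarrow> (\<forall>i\<in>{1..n}. l i \<le> 0 \<and> 0 \<le> u i) \<longrightarrow>
      2 \<le> s \<longrightarrow> s \<le> n \<longrightarrow>
      (\<exists>k::nat. lq_pieces (Pstar lam1 lam2 z l u s) k \<and> real k \<le> C * real s powr (1 + \<epsilon>))"
proof (intro allI impI)
  fix \<epsilon> :: real assume eps: "\<epsilon> > 0"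
  show "\<exists>C::real. \<forall>(n::nat) (z::nat \<Rightarrow> real) (l::nat \<Rightarrow> real) (u::nat \<Rightarrow> real)
      (lam1::real) (lam2::real) (s::nat).
      lam1 > 0 \<longrightarrow> lam2 > 0 \<longrightarrow> (\<forall>i\<in>{1..n}. l i \<le> 0 \<and> 0 \<le> u i) \<longrightarrow>
      2 \<le> s \<longrightarrow> s \<le> n \<longrightarrow>
      (\<exists>k::nat. lq_pieces (Pstar lam1 lam2 z l u s) k \<and> real k \<le> C * real s powr (1 + \<epsilon>))"
  proof (intro exI[of _ "6::real"] allI impI)
    fix n :: nat and z l u :: "nat \<Rightarrow> real" and lam1 lam2 :: real and s :: nat
    assume l1: "lam1 > 0" and l2: "lam2 > 0" and lu: "\<forall>i\<in>{1..n}. l i \<le> 0 \<and> 0 \<le> u i"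
      and s2: "2 \<le> s" and sn: "s \<le> n"
    have s1: "1 \<le> s" using s2 by simp
    obtain k where k: "lq_pieces (Pstar lam1 lam2 z l u s) k" "k \<le> 6 * s"
      using main_bound[OF less_imp_le[OF l1] less_imp_le[OF l2] lu s1 sn] by blast
    have "real s powr 1 \<le> real s powr (1 + \<epsilon>)"
      by (rule powr_mono) (use eps s1 in auto)
    then have "real s \<le> real s powr (1 + \<epsilon>)" by (simp add: powr_one)
    moreover have "real k \<le> 6 * real s" using k(2) by linarith
    ultimately have "real k \<le> 6 * real s powr (1 + \<epsilon>)" by linarith
    then show "\<exists>k::nat. lq_pieces (Pstar lam1 lam2 z l u s) k \<and> real k \<le> 6 * real s powr (1 + \<epsilon>)"
      using k(1) by blast
  qed
qed

end
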